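(* Let $N\ge 2$ and $u>0$. For every $x$ with $0\le x<1$ there exists a neutral evolutionary model on $N$ sites (a replacement rule $p$ satisfying the fixation assumption described in the context) whose overall fixation probability $\rho=\frac{1}{B}\sum_{i=1}^N d_i\rho_i$ equals $x$. Consequently, the molecular clock rate $K=Nu\rho$ can take any value in $[0,Nu)$.
   Context: There are $N$ sites $1,\ldots,N$, each always occupied by one individual of type M (mutant) or R (resident); a state is $\mathbf{s}\in\{\mathrm{M},\mathrm{R}\}^N$. A replacement event is a pair $(R,\alpha)$ with $R\subseteq\{1,\ldots,N\}$ and $\alpha:R\to\{1,\ldots,N\}$. A replacement rule is a probability distribution $p(R,\alpha)$ on replacement events, independent of the state. The evolutionary Markov chain: at each time-step an event $(R,\alpha)$ is drawn with probability $p(R,\alpha)$ and the new state is $s_i'=s_i$ if $i\notin R$, $s_i'=s_{\alpha(i)}$ if $i\in R$. Fixation assumption: there exist a site $i$ and a finite sequence of replacement events, each of positive probability, such that if these events occur consecutively (from any initial state) every site ends up carrying the type initially at site $i$. Define $e_{ij}=\sum_{(R,\alpha):\, j\in R,\ \alpha(j)=i}p(R,\alpha)$, $b_i=\sum_j e_{ij}$, $d_i=\sum_j e_{ji}$, $B=\sum_{i,j}e_{ij}$. The site-specific fixation probability $\rho_i$ is the probability that the chain started from the state with M at site $i$ and R elsewhere is eventually absorbed in $(\mathrm{M},\ldots,\mathrm{M})$. *)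

theory Defs
  imports "HOL-Probability.Probability_Mass_Function" "HOL-Library.FuncSet"
begin

text \<open>Sites are 1..N. Types: mutant M or resident R.\<close>
datatype ityp = M | R

type_synonym state = "nat \<Rightarrow> ityp"

text \<open>A replacement event (R, alpha): R a set of sites, alpha : R -> sites,
  represented canonically as an extensional function on R.\<close>
type_synonym event = "nat set \<times> (nat \<Rightarrow> nat)"

definition sites :: "nat \<Rightarrow> nat set" where
  "sites N = {1..N}"

definition valid_event :: "nat \<Rightarrow> event \<Rightarrow> bool" where
  "valid_event N ev \<longleftrightarrow> fst ev \<subseteq> sites N \<and> snd ev \<in> fst ev \<rightarrow>\<^sub>E sites N"

definition replacement_rule :: "nat \<Rightarrow> event pmf \<Rightarrow> bool" where
  "replacement_rule N p \<longleftrightarrow> (\<forall>ev\<in>set_pmf p. valid_event N ev)"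

definition apply_event :: "event \<Rightarrow> state \<Rightarrow> state" where
  "apply_event ev s = (\<lambda>i. if i \<in> fst ev then s (snd ev i) else s i)"

definition fixation_assumption :: "nat \<Rightarrow> event pmf \<Rightarrow> bool" where
  "fixation_assumption N p \<longleftrightarrow>
     (\<exists>i\<in>sites N. \<exists>evs. set evs \<subseteq> set_pmf p \<and>
        (\<forall>s. \<forall>j\<in>sites N. fold apply_event evs s j = s i))"

definition e_weight :: "event pmf \<Rightarrow> nat \<Rightarrow> nat \<Rightarrow> real" where
  "e_weight p i j = measure_pmf.prob p {ev. j \<in> fst ev \<and> snd ev j = i}"

definition b_birth :: "nat \<Rightarrow> event pmf \<Rightarrow> nat \<Rightarrow> real" where
  "b_birth N p i = (\<Sum>j\<in>sites N. e_weight p i j)"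

definition d_death :: "nat \<Rightarrow> event pmf \<Rightarrow> nat \<Rightarrow> real" where
  "d_death N p i = (\<Sum>j\<in>sites N. e_weight p j i)"

definition B_total :: "nat \<Rightarrow> event pmf \<Rightarrow> real" where
  "B_total N p = (\<Sum>i\<in>sites N. \<Sum>j\<in>sites N. e_weight p i j)"

definition step :: "event pmf \<Rightarrow> state \<Rightarrow> state pmf" where
  "step p s = map_pmf (\<lambda>ev. apply_event ev s) p"

primrec chain :: "event pmf \<Rightarrow> nat \<Rightarrow> state \<Rightarrow> state pmf" where
  "chain p 0 s = return_pmf s"
| "chain p (Suc n) s = bind_pmf (chain p n s) (step p)"

definition all_M :: "nat \<Rightarrow> state set" where
  "all_M N = {s. \<forall>j\<in>sites N. s j = M}"

definition single_mutant :: "nat \<Rightarrow> state" where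
  "single_mutant i = (\<lambda>j. if j = i then M else R)"

text \<open>Site-specific fixation probability: probability of eventual absorption in
  all-M, i.e. the limit of the probability of being in the absorbing state all-M
  after n steps (this sequence is nondecreasing since all-M is absorbing).\<close>
definition rho_site :: "nat \<Rightarrow> event pmf \<Rightarrow> nat \<Rightarrow> real" where
  "rho_site N p i = lim (\<lambda>n. measure_pmf.prob (chain p n (single_mutant i)) (all_M N))"

definition rho_overall :: "nat \<Rightarrow> event pmf \<Rightarrow> real" where
  "rho_overall N p = (1 / B_total N p) * (\<Sum>i\<in>sites N. d_death N p i * rho_site N p i)"

end

theory Submission
  imports Defs
begin

definition evA :: "nat \<Rightarrow> event" where
  "evA N = ({2..N}, restrict (\<lambda>_. 1) {2..N})"
definition evS :: event where
  "evS = ({1}, restrict (\<lambda>_. 1) {1})"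
definition pp :: "nat \<Rightarrow> real \<Rightarrow> event pmf" where
  "pp N a = map_pmf (\<lambda>b. if b then evA N else evS) (bernoulli_pmf a)"

lemma evA_ne: "evA N \<noteq> evS"
  by (auto simp: evA_def evS_def)

lemma measure_pp:
  assumes "0 \<le> a" "a \<le> 1"
  shows "measure_pmf.prob (pp N a) E = (if evA N \<in> E then a else 0) + (if evS \<in> E then 1 - a else 0)"
proof -
  have "measure_pmf.prob (pp N a) E = measure_pmf.prob (bernoulli_pmf a) {b. (if b then evA N else evS) \<in> E}"
    by (simp add: pp_def vimage_def)
  also have "\<dots> = sum (pmf (bernoulli_pmf a)) {b. (if b then evA N else evS) \<in> E}"
    by (rule measure_measure_pmf_finite) simp
  also have "\<dots> = (if evA N \<in> E then a else 0) + (if evS \<in> E then 1 - a else 0)"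
  proof -
    let ?X = "{b. (if b then evA N else evS) \<in> E}"
    have X: "?X = (if evA N \<in> E then {True} else {}) \<union> (if evS \<in> E then {False} else {})"
      by (auto split: if_splits)
    show ?thesis
      using assms unfolding X
      by (cases "evA N \<in> E"; cases "evS \<in> E") auto
  qed
  finally show ?thesis .
qed

lemma e_pp:
  assumes "0 \<le> a" "a \<le> 1"
  shows "e_weight (pp N a) i j = (if i = 1 \<and> 2 \<le> j \<and> j \<le> N then a else 0) + (if i = 1 \<and> j = 1 then 1 - a else 0)"
  unfolding e_weight_def using assms
  by (simp add: measure_pp evA_def evS_def) (auto)

lemma sites_split: "N \<ge> 1 \<Longrightarrow> sites N = insert 1 {2..N}"
  by (auto simp: sites_def)

lemma B_pp:
  assumes "0 \<le> a" "a \<le> 1" "N \<ge> 2"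
  shows "B_total N (pp N a) = (1 - a) + (real N - 1) * a"
proof -
  have "B_total N (pp N a) = (\<Sum>j\<in>sites N. e_weight (pp N a) 1 j)"
    unfolding B_total_def using assms
    by (subst sites_split[of N]) (auto simp: e_pp sum.neutral)
  also have "\<dots> = (1 - a) + (real N - 1) * a"
    using assms by (subst sites_split[of N]) (auto simp: e_pp of_nat_diff)
  finally show ?thesis .
qed

lemma d1_pp:
  assumes "0 \<le> a" "a \<le> 1" "N \<ge> 2"
  shows "d_death N (pp N a) 1 = 1 - a"
  unfolding d_death_def using assms
  by (subst sites_split[of N]) (auto simp: e_pp sum.neutral)

lemma set_pp: "set_pmf (pp N a) \<subseteq> {evA N, evS}"
  by (auto simp: pp_def)

lemma apply1: "ev \<in> {evA N, evS} \<Longrightarrow> apply_event ev t 1 = t 1"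
  by (auto simp: apply_event_def evA_def evS_def)

lemma chain_R:
  assumes "t 1 = R"
  shows "u \<in> set_pmf (chain (pp N a) n t) \<Longrightarrow> u 1 = R"
proof (induction n arbitrary: u)
  case 0 then show ?case using assms by simp
next
  case (Suc n)
  then obtain v ev where "v \<in> set_pmf (chain (pp N a) n t)" "ev \<in> set_pmf (pp N a)" "u = apply_event ev v"
    unfolding chain.simps set_bind_pmf step_def set_map_pmf by blast
  note h = this
  have "ev \<in> {evA N, evS}" using h(2) set_pp by blast
  then have "u 1 = v 1" using h(3) apply1 by blast
  then show ?case using Suc.IH h(1) by simp
qed

lemma rho_other:
  assumes "i \<noteq> 1" "N \<ge> 2"
  shows "rho_site N (pp N a) i = 0"
proof -
  have "measure_pmf.prob (chain (pp N a) n (single_mutant i)) (all_M N) = 0" for n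
  proof (subst measure_pmf_zero_iff, rule ccontr)
    assume "set_pmf (chain (pp N a) n (single_mutant i)) \<inter> all_M N \<noteq> {}"
    then obtain u where u: "u \<in> set_pmf (chain (pp N a) n (single_mutant i))" "u \<in> all_M N" by blast
    have "u 1 = R" by (rule chain_R[OF _ u(1)]) (use assms in \<open>simp add: single_mutant_def\<close>)
    moreover have "u 1 = M" using u(2) assms by (auto simp: all_M_def sites_def)
    ultimately show False by simp
  qed
  then show ?thesis unfolding rho_site_def by simp
qed

lemma sm_notin: "N \<ge> 2 \<Longrightarrow> single_mutant 1 \<notin> all_M N"
  by (auto simp: all_M_def sites_def single_mutant_def intro!: bexI[of _ 2])

lemma allM_closed:
  assumes "t \<in> all_M N" "ev \<in> {evA N, evS}"
  shows "apply_event ev t \<in> all_M N"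
  using assms by (auto simp: all_M_def sites_def apply_event_def evA_def evS_def)

lemma applyS: "apply_event evS t = t"
  by (auto simp: apply_event_def evS_def)

lemma applyA_sm: "apply_event (evA N) (single_mutant 1) \<in> all_M N"
  by (auto simp: all_M_def sites_def apply_event_def evA_def single_mutant_def)

lemma chain_supp:
  "u \<in> set_pmf (chain (pp N a) n (single_mutant 1)) \<Longrightarrow> u = single_mutant 1 \<or> u \<in> all_M N"
proof (induction n arbitrary: u)
  case 0 then show ?case by simp
next
  case (Suc n)
  then obtain v ev where h: "v \<in> set_pmf (chain (pp N a) n (single_mutant 1))" "ev \<in> set_pmf (pp N a)" "u = apply_event ev v"
    unfolding chain.simps set_bind_pmf step_def set_map_pmf by blast
  have ev: "ev \<in> {evA N, evS}" using h(2) set_pp by blast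
  from Suc.IH[OF h(1)] show ?case
  proof
    assume v: "v = single_mutant 1"
    from ev show ?thesis
    proof
      assume "ev = evA N" then show ?thesis using h(3) v applyA_sm by simp
    next
      assume "ev \<in> {evS}" then show ?thesis using h(3) v applyS by simp
    qed
  next
    assume "v \<in> all_M N" then show ?thesis using h(3) allM_closed ev by blast
  qed
qed

lemma pmf_step_sm:
  assumes "0 \<le> a" "a \<le> 1" "N \<ge> 2"
  shows "pmf (step (pp N a) (single_mutant 1)) (single_mutant 1) = 1 - a"
proof -
  have "apply_event (evA N) (single_mutant 1) \<noteq> single_mutant 1"
    using applyA_sm[of N] sm_notin[OF assms(3)] by metis
  then have 1: "evA N \<notin> (\<lambda>ev. apply_event ev (single_mutant 1)) -` {single_mutant 1}"
    by simp
  have 2: "evS \<in> (\<lambda>ev. apply_event ev (single_mutant 1)) -` {single_mutant 1}"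
    by (simp add: applyS)
  have "pmf (step (pp N a) (single_mutant 1)) (single_mutant 1) =
     measure_pmf.prob (pp N a) ((\<lambda>ev. apply_event ev (single_mutant 1)) -` {single_mutant 1})"
    unfolding step_def pmf_map ..
  also have "\<dots> = 1 - a" unfolding measure_pp[OF assms(1,2)] using 1 2 by simp
  finally show ?thesis .
qed

lemma pmf_step_M:
  assumes "t \<in> all_M N" "N \<ge> 2"
  shows "pmf (step (pp N a) t) (single_mutant 1) = 0"
proof (rule pmf_eq_0_set_pmf[THEN iffD2])
  show "single_mutant 1 \<notin> set_pmf (step (pp N a) t)"
  proof
    assume "single_mutant 1 \<in> set_pmf (step (pp N a) t)"
    then obtain ev where ev: "ev \<in> set_pmf (pp N a)" "single_mutant 1 = apply_event ev t"
      unfolding step_def set_map_pmf by blast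
    have "ev \<in> {evA N, evS}" using ev(1) set_pp by fast
    from allM_closed[OF assms(1) this] ev(2) have "single_mutant 1 \<in> all_M N" by simp
    then show False using sm_notin[OF assms(2)] by simp
  qed
qed

lemma pmf_chain_sm:
  assumes "0 \<le> a" "a \<le> 1" "N \<ge> 2"
  shows "pmf (chain (pp N a) n (single_mutant 1)) (single_mutant 1) = (1 - a) ^ n"
proof (induction n)
  case 0 then show ?case by simp
next
  case (Suc n)
  let ?M = "chain (pp N a) n (single_mutant 1)"
  let ?sm = "single_mutant 1"
  have "pmf (chain (pp N a) (Suc n) ?sm) ?sm = (\<integral>x. pmf (step (pp N a) x) ?sm \<partial>measure_pmf ?M)"
    by (simp add: pmf_bind)
  also have "\<dots> = (\<integral>x. (1 - a) * indicator {?sm} x \<partial>measure_pmf ?M)"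
  proof (rule integral_cong_AE)
    show "AE x in measure_pmf ?M. pmf (step (pp N a) x) ?sm = (1 - a) * indicator {?sm} x"
    proof (rule AE_pmfI)
      fix x assume "x \<in> set_pmf ?M"
      from chain_supp[OF this] show "pmf (step (pp N a) x) ?sm = (1 - a) * indicator {?sm} x"
      proof (elim disjE)
        assume "x = ?sm" then show ?thesis using pmf_step_sm[OF assms] by simp
      next
        assume x: "x \<in> all_M N"
        then have "x \<noteq> ?sm" using sm_notin[OF assms(3)] by metis
        then show ?thesis using pmf_step_M[OF x assms(3)] by simp
      qed
    qed
  qed auto
  also have "\<dots> = (1 - a) * pmf ?M ?sm"
    by (simp add: measure_pmf_single)
  finally show ?case using Suc.IH by simp
qed

lemma prob_chain_sm:
  assumes "0 \<le> a" "a \<le> 1" "N \<ge> 2"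
  shows "measure_pmf.prob (chain (pp N a) n (single_mutant 1)) (all_M N) = 1 - (1 - a) ^ n"
proof -
  let ?M = "chain (pp N a) n (single_mutant 1)"
  have "measure_pmf.prob ?M (all_M N \<union> {single_mutant 1}) = 1"
    by (subst measure_pmf.prob_eq_1) (simp, unfold AE_measure_pmf_iff, use chain_supp[of _ N a n] in blast)
  moreover have "measure_pmf.prob ?M (all_M N \<union> {single_mutant 1}) =
     measure_pmf.prob ?M (all_M N) + measure_pmf.prob ?M {single_mutant 1}"
    by (rule measure_pmf.finite_measure_Union) (use sm_notin[OF assms(3)] in auto)
  ultimately show ?thesis using pmf_chain_sm[OF assms, of n] by (simp add: measure_pmf_single)
qed

lemma rho_1:
  assumes "0 < a" "a \<le> 1" "N \<ge> 2"
  shows "rho_site N (pp N a) 1 = 1"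
proof -
  have "(\<lambda>n. (1 - a) ^ n) \<longlonglongrightarrow> 0"
  proof (rule LIMSEQ_power_zero)
    show "norm (1 - a) < 1" using assms by simp
  qed
  then have "(\<lambda>n. 1 - (1 - a) ^ n) \<longlonglongrightarrow> 1 - 0"
    by (rule tendsto_diff[OF tendsto_const])
  then have L: "(\<lambda>n. 1 - (1 - a) ^ n) \<longlonglongrightarrow> 1" by simp
  have eq: "(\<lambda>n. measure_pmf.prob (chain (pp N a) n (single_mutant 1)) (all_M N)) = (\<lambda>n. 1 - (1 - a) ^ n)"
    using prob_chain_sm[of a N] assms by auto
  show ?thesis unfolding rho_site_def eq using L by (rule limI)
qed

lemma rr_pp: "N \<ge> 2 \<Longrightarrow> replacement_rule N (pp N a)"
  unfolding replacement_rule_def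
proof
  fix ev assume "N \<ge> 2" "ev \<in> set_pmf (pp N a)"
  then have "ev \<in> {evA N, evS}" using set_pp by blast
  then show "valid_event N ev"
    using \<open>N \<ge> 2\<close> by (auto simp: valid_event_def evA_def evS_def sites_def)
qed

lemma fix_pp:
  assumes "0 < a" "a \<le> 1" "N \<ge> 2"
  shows "fixation_assumption N (pp N a)"
  unfolding fixation_assumption_def
proof (intro bexI[of _ 1] exI[of _ "[evA N]"] conjI allI ballI)
  have "True \<in> set_pmf (bernoulli_pmf a)" using assms by (simp add: set_pmf_iff)
  then show "set [evA N] \<subseteq> set_pmf (pp N a)" by (auto simp: pp_def)
  fix s j assume "j \<in> sites N"
  then have "j = 1 \<or> j \<in> {2..N}" by (auto simp: sites_def)
  then show "fold apply_event [evA N] s j = s 1"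
    by (auto simp: apply_event_def evA_def)
qed (use assms in \<open>auto simp: sites_def\<close>)

lemma rho_overall_pp:
  assumes "0 < a" "a \<le> 1" "N \<ge> 2"
  shows "rho_overall N (pp N a) = (1 - a) / ((1 - a) + (real N - 1) * a)"
proof -
  have z: "(\<Sum>i\<in>{2..N}. d_death N (pp N a) i * rho_site N (pp N a) i) = 0"
    by (rule sum.neutral) (use assms in \<open>auto simp: rho_other\<close>)
  have "(\<Sum>i\<in>sites N. d_death N (pp N a) i * rho_site N (pp N a) i)
      = d_death N (pp N a) 1 * rho_site N (pp N a) 1 + (\<Sum>i\<in>{2..N}. d_death N (pp N a) i * rho_site N (pp N a) i)"
    unfolding sites_split[of N, OF order_trans[OF one_le_numeral assms(3)]]
    by (rule sum.insert) auto
  also have "\<dots> = 1 - a" unfolding z using d1_pp[of a N] rho_1[OF assms] assms by simp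
  finally have "(\<Sum>i\<in>sites N. d_death N (pp N a) i * rho_site N (pp N a) i) = 1 - a" .
  then show ?thesis unfolding rho_overall_def using B_pp[of a N] assms by (simp add: divide_inverse mult.commute)
qed

lemma part1:
  assumes "N \<ge> 2" "0 \<le> x" "x < 1"
  shows "\<exists>p. replacement_rule N p \<and> fixation_assumption N p \<and> rho_overall N p = x"
proof -
  define D where "D = x * (real N - 2) + 1"
  have D: "D \<ge> 1" using assms by (simp add: D_def)
  define a where "a = (1 - x) / D"
  have a0: "0 < a" using D assms by (simp add: a_def)
  have a1: "a \<le> 1" using D assms by (simp add: a_def D_def field_simps)
  have Dn: "D \<noteq> 0" using D by simp
  have aD: "a * D = 1 - x" using Dn by (simp add: a_def)
  have e1: "(1 - a) * D = x * (real N - 1)"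
  proof -
    have "(1 - a) * D = D - a * D" by (simp add: algebra_simps)
    also have "\<dots> = x * (real N - 1)" unfolding aD by (simp add: D_def algebra_simps)
    finally show ?thesis .
  qed
  have e2: "((1 - a) + (real N - 1) * a) * D = real N - 1"
  proof -
    have "((1 - a) + (real N - 1) * a) * D = D + (real N - 2) * (a * D)" by (simp add: algebra_simps)
    also have "\<dots> = real N - 1" unfolding aD by (simp add: D_def algebra_simps)
    finally show ?thesis .
  qed
  have pos: "real N - 1 > 0" using assms by simp
  have "(1 - a) / ((1 - a) + (real N - 1) * a) = ((1 - a) * D) / (((1 - a) + (real N - 1) * a) * D)"
    using Dn by simp
  also have "\<dots> = x" unfolding e1 e2 using pos by simp
  finally have "(1 - a) / ((1 - a) + (real N - 1) * a) = x" .
  then show ?thesis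
    using rr_pp[OF assms(1)] fix_pp[OF a0 a1 assms(1)] rho_overall_pp[OF a0 a1 assms(1)] by metis
qed

theorem mainTheorem4:
  fixes N :: nat and u :: real
  assumes "N \<ge> 2" and "u > 0"
  shows "(\<forall>x::real. 0 \<le> x \<and> x < 1 \<longrightarrow>
            (\<exists>p. replacement_rule N p \<and> fixation_assumption N p \<and> rho_overall N p = x))
       \<and> (\<forall>K::real. 0 \<le> K \<and> K < real N * u \<longrightarrow>
            (\<exists>p. replacement_rule N p \<and> fixation_assumption N p \<and>
                 real N * u * rho_overall N p = K))"
proof (intro conjI allI impI)
  fix x :: real assume "0 \<le> x \<and> x < 1"
  then show "\<exists>p. replacement_rule N p \<and> fixation_assumption N p \<and> rho_overall N p = x"
    using part1 assms by blast
next
  fix K :: real assume K: "0 \<le> K \<and> K < real N * u"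
  have pos: "real N * u > 0" using assms by simp
  have "0 \<le> K / (real N * u)" "K / (real N * u) < 1" using K pos by (auto simp: field_simps)
  then obtain p where "replacement_rule N p" "fixation_assumption N p" "rho_overall N p = K / (real N * u)"
    using part1 assms by blast
  moreover have "real N * u * (K / (real N * u)) = K"
    using pos by (metis less_irrefl nonzero_mult_div_cancel_left times_divide_eq_right)
  ultimately show "\<exists>p. replacement_rule N p \<and> fixation_assumption N p \<and> real N * u * rho_overall N p = K"
    by metis
qed

end
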